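(* Let $(L,\vee,\wedge,\to,f,g,0,1)$ be a spatial HGC-algebra. Then there exists a GC-frame $\mathcal{F}=(X,\leq,R)$ such that $(L,\vee,\wedge,\to,f,g,0,1)$ is isomorphic to the complex algebra $\mathbb{H}_{\rm GC}(\mathcal{F})=(\mathcal{T}_\leq,\cup,\cap,\to,{}^\blacktriangle,{}^\blacktriangledown,\emptyset,X)$.
   Context: A pair $(f,g)$ of maps $f,g\colon L\to L$ on a lattice $L$ is an (order-preserving) Galois connection if for all $a,b\in L$: $f(a)\leq b \iff a\leq g(b)$. An HGC-algebra $(L,\vee,\wedge,\to,f,g,0,1)$ is a Heyting algebra $(L,\vee,\wedge,\to,0,1)$ (where $a\to b$ is the greatest $x$ with $a\wedge x\leq b$) equipped with an order-preserving Galois connection $(f,g)$ on $L$. An element $a$ of a complete lattice is completely join-irreducible if $a=\bigvee S$ implies $a\in S$ for every subset $S$; a complete lattice is spatial if every element is the join of the completely join-irreducible elements below it. An HGC-algebra is spatial if its underlying lattice is a spatial (in particular complete) lattice. A GC-frame $(X,\leq,R)$ is a set $X$ with a quasiorder (reflexive, transitive relation) $\leq$ and a binary relation $R\subseteq X\times X$ such that $x\leq x'$, $x\,R\,y$ and $y'\leq y$ imply $x'\,R\,y'$. For a quasiorder $\leq$ on $X$, $\mathcal{T}_\leq$ is the set of all subsets $B\subseteq X$ that are $\leq$-closed upward ($x\in B$, $x\leq y$ imply $y\in B$). For $A\subseteq X$: $A^\blacktriangle=\{x\in X\mid x\,R\,y \text{ for some } y\in A\}$ and $A^\blacktriangledown=\{x\in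 X\mid \text{for all } y,\ y\,R\,x \text{ implies } y\in A\}$. On $\mathcal{T}_\leq$, $A\to B=\{a\in X\mid \text{for all } b\geq a,\ b\in A \text{ implies } b\in B\}$. The complex algebra $\mathbb{H}_{\rm GC}(\mathcal{F})$ is $(\mathcal{T}_\leq,\cup,\cap,\to,{}^\blacktriangle,{}^\blacktriangledown,\emptyset,X)$; isomorphism means an isomorphism preserving $\vee,\wedge,\to,f,g,0,1$ (with $f$ corresponding to ${}^\blacktriangle$ and $g$ to ${}^\blacktriangledown$). *)

theory Defs
  imports Main
begin

text \<open>The underlying lattice of a spatial HGC-algebra is complete,
  so we model it as a type of class complete_lattice; sup/inf/bot/top are the
  lattice operations, and the Heyting implication and the Galois connection
  are extra operations.\<close>

definition heyting_imp :: "('a::lattice \<Rightarrow> 'a \<Rightarrow> 'a) \<Rightarrow> bool" where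
  "heyting_imp imp \<longleftrightarrow>
     (\<forall>a b. inf a (imp a b) \<le> b \<and> (\<forall>x. inf a x \<le> b \<longrightarrow> x \<le> imp a b))"

definition galois_conn :: "('a::order \<Rightarrow> 'a) \<Rightarrow> ('a \<Rightarrow> 'a) \<Rightarrow> bool" where
  "galois_conn f g \<longleftrightarrow> (\<forall>a b. f a \<le> b \<longleftrightarrow> a \<le> g b)"

definition HGC_algebra :: "('a::{lattice,bounded_lattice} \<Rightarrow> 'a \<Rightarrow> 'a) \<Rightarrow> ('a \<Rightarrow> 'a) \<Rightarrow> ('a \<Rightarrow> 'a) \<Rightarrow> bool" where
  "HGC_algebra imp f g \<longleftrightarrow> heyting_imp imp \<and> galois_conn f g"

definition completely_join_irreducible :: "'a::complete_lattice \<Rightarrow> bool" where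
  "completely_join_irreducible a \<longleftrightarrow> (\<forall>S. a = Sup S \<longrightarrow> a \<in> S)"

definition spatial :: "'a::complete_lattice itself \<Rightarrow> bool" where
  "spatial _ \<longleftrightarrow> (\<forall>a::'a. a = Sup {j. completely_join_irreducible j \<and> j \<le> a})"

definition GC_frame :: "'b set \<Rightarrow> ('b \<Rightarrow> 'b \<Rightarrow> bool) \<Rightarrow> ('b \<Rightarrow> 'b \<Rightarrow> bool) \<Rightarrow> bool" where
  "GC_frame X le R \<longleftrightarrow>
     (\<forall>x y. le x y \<longrightarrow> x \<in> X \<and> y \<in> X) \<and>
     (\<forall>x y. R x y \<longrightarrow> x \<in> X \<and> y \<in> X) \<and>
     (\<forall>x\<in>X. le x x) \<and>
     (\<forall>x y z. le x y \<longrightarrow> le y z \<longrightarrow> le x z) \<and>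
     (\<forall>x x' y y'. le x x' \<longrightarrow> R x y \<longrightarrow> le y' y \<longrightarrow> R x' y')"

definition up_sets :: "'b set \<Rightarrow> ('b \<Rightarrow> 'b \<Rightarrow> bool) \<Rightarrow> 'b set set" where
  "up_sets X le = {B. B \<subseteq> X \<and> (\<forall>x y. x \<in> B \<longrightarrow> le x y \<longrightarrow> y \<in> B)}"

definition blacktriangle :: "'b set \<Rightarrow> ('b \<Rightarrow> 'b \<Rightarrow> bool) \<Rightarrow> 'b set \<Rightarrow> 'b set" where
  "blacktriangle X R A = {x \<in> X. \<exists>y\<in>A. R x y}"

definition blacktriangledown :: "'b set \<Rightarrow> ('b \<Rightarrow> 'b \<Rightarrow> bool) \<Rightarrow> 'b set \<Rightarrow> 'b set" where
  "blacktriangledown X R A = {x \<in> X. \<forall>y. R y x \<longrightarrow> y \<in> A}"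

definition frame_imp :: "'b set \<Rightarrow> ('b \<Rightarrow> 'b \<Rightarrow> bool) \<Rightarrow> 'b set \<Rightarrow> 'b set \<Rightarrow> 'b set" where
  "frame_imp X le A B = {a \<in> X. \<forall>b. le a b \<longrightarrow> b \<in> A \<longrightarrow> b \<in> B}"

definition HGC_iso_complex ::
  "('a::complete_lattice \<Rightarrow> 'a \<Rightarrow> 'a) \<Rightarrow> ('a \<Rightarrow> 'a) \<Rightarrow> ('a \<Rightarrow> 'a) \<Rightarrow>
   'b set \<Rightarrow> ('b \<Rightarrow> 'b \<Rightarrow> bool) \<Rightarrow> ('b \<Rightarrow> 'b \<Rightarrow> bool) \<Rightarrow> ('a \<Rightarrow> 'b set) \<Rightarrow> bool" where
  "HGC_iso_complex imp f g X le R h \<longleftrightarrow>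
     bij_betw h UNIV (up_sets X le) \<and>
     (\<forall>a b. h (sup a b) = h a \<union> h b) \<and>
     (\<forall>a b. h (inf a b) = h a \<inter> h b) \<and>
     (\<forall>a b. h (imp a b) = frame_imp X le (h a) (h b)) \<and>
     (\<forall>a. h (f a) = blacktriangle X R (h a)) \<and>
     (\<forall>a. h (g a) = blacktriangledown X R (h a)) \<and>
     h bot = {} \<and> h top = X"

end

theory Submission
  imports Defs
begin

lemma heyting_distrib:
  fixes imp :: "'a::complete_lattice \<Rightarrow> 'a \<Rightarrow> 'a" and x :: 'a
  assumes "heyting_imp imp"
  shows "inf x (Sup S) = Sup ((inf x) ` S)"
proof (rule order_antisym)
  have "\<And>s. s \<in> S \<Longrightarrow> s \<le> imp x (Sup ((inf x) ` S))"
    using assms unfolding heyting_imp_def by (meson SUP_upper)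
  then have "Sup S \<le> imp x (Sup ((inf x) ` S))" by (rule Sup_least)
  then have "inf x (Sup S) \<le> inf x (imp x (Sup ((inf x) ` S)))" by (rule inf_mono[OF order.refl])
  also have "\<dots> \<le> Sup ((inf x) ` S)" using assms unfolding heyting_imp_def by blast
  finally show "inf x (Sup S) \<le> Sup ((inf x) ` S)" .
next
  show "Sup ((inf x) ` S) \<le> inf x (Sup S)"
    by (rule SUP_least) (simp add: Sup_upper le_infI2)
qed

lemma cji_prime:
  fixes imp :: "'a::complete_lattice \<Rightarrow> 'a \<Rightarrow> 'a" and x :: 'a
  assumes "heyting_imp imp" "completely_join_irreducible x" "x \<le> Sup S"
  shows "\<exists>s\<in>S. x \<le> s"
proof -
  have "x = inf x (Sup S)" using assms(3) by (simp add: inf_absorb1)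
  also have "\<dots> = Sup ((inf x) ` S)" by (rule heyting_distrib[OF assms(1)])
  finally have "x \<in> (inf x) ` S" using assms(2) unfolding completely_join_irreducible_def by blast
  then obtain s where "s \<in> S" "x = inf x s" by blast
  then show ?thesis by (metis inf.cobounded2)
qed

lemma cji_not_bot: "completely_join_irreducible x \<Longrightarrow> x \<noteq> bot"
  unfolding completely_join_irreducible_def by (metis Sup_empty empty_iff)

theorem theorem4p2:
  fixes imp :: "'a::complete_lattice \<Rightarrow> 'a \<Rightarrow> 'a"
    and f g :: "'a \<Rightarrow> 'a"
  assumes "HGC_algebra imp f g"
    and "spatial TYPE('a)"
  shows "\<exists>(X::'a set) le R h. GC_frame X le R \<and> HGC_iso_complex imp f g X le R h"
proof -
  have H: "heyting_imp imp" and G: "galois_conn f g" using assms(1) unfolding HGC_algebra_def by auto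
  have Gc: "\<And>a b. f a \<le> b \<longleftrightarrow> a \<le> g b" using G unfolding galois_conn_def by blast
  have fmono: "\<And>a b. a \<le> b \<Longrightarrow> f a \<le> f b" using Gc by (meson order.trans order.refl)
  have sp: "\<And>a::'a. a = Sup {j. completely_join_irreducible j \<and> j \<le> a}"
    using assms(2) unfolding spatial_def by blast
  have Himp1: "\<And>a b. inf a (imp a b) \<le> b" and Himp2: "\<And>a b x. inf a x \<le> b \<Longrightarrow> x \<le> imp a b"
    using H unfolding heyting_imp_def by auto
  define J where "J = {j::'a. completely_join_irreducible j}"
  define le where "le = (\<lambda>x y::'a. x \<in> J \<and> y \<in> J \<and> y \<le> x)"
  define R where "R = (\<lambda>x y::'a. x \<in> J \<and> y \<in> J \<and> x \<le> f y)"
  define h where "h = (\<lambda>a::'a. {j \<in> J. j \<le> a})"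
  have prime: "\<And>x S. x \<in> J \<Longrightarrow> x \<le> Sup S \<Longrightarrow> \<exists>s\<in>S. x \<le> s"
    using cji_prime[OF H] unfolding J_def by blast
  have below: "\<And>a b. (\<And>j. j \<in> J \<Longrightarrow> j \<le> a \<Longrightarrow> j \<le> b) \<Longrightarrow> a \<le> b"
  proof -
    fix a b :: 'a assume "\<And>j. j \<in> J \<Longrightarrow> j \<le> a \<Longrightarrow> j \<le> b"
    then have "Sup {j. completely_join_irreducible j \<and> j \<le> a} \<le> b"
      by (intro Sup_least) (auto simp: J_def)
    then show "a \<le> b" using sp[of a] by simp
  qed
  have tr: "\<And>x x' y y'. x' \<le> x \<Longrightarrow> x \<le> f y \<Longrightarrow> y \<le> y' \<Longrightarrow> x' \<le> f y'"
    using fmono order.trans by metis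
  have frame: "GC_frame J le R"
    unfolding GC_frame_def le_def R_def using tr by (auto dest: order.trans)
  have inj: "inj h"
  proof (rule injI)
    fix a b assume "h a = h b"
    then have "\<And>j. j \<in> J \<Longrightarrow> j \<le> a \<longleftrightarrow> j \<le> b" unfolding h_def by blast
    then show "a = b" using below by (meson order.antisym)
  qed
  have range: "range h = up_sets J le"
  proof (rule set_eqI, rule iffI)
    fix B assume "B \<in> range h"
    then show "B \<in> up_sets J le" unfolding up_sets_def h_def le_def by (auto dest: order.trans)
  next
    fix B assume B: "B \<in> up_sets J le"
    have "h (Sup B) = B"
    proof (rule set_eqI, rule iffI)
      fix j assume "j \<in> h (Sup B)"
      then have "j \<in> J" "j \<le> Sup B" unfolding h_def by auto
      then obtain s where "s \<in> B" "j \<le> s" using prime by blast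
      then show "j \<in> B" using B \<open>j \<in> J\<close> unfolding up_sets_def le_def by blast
    next
      fix j assume "j \<in> B" then show "j \<in> h (Sup B)"
        using B unfolding up_sets_def h_def by (auto intro: Sup_upper)
    qed
    then show "B \<in> range h" by (metis rangeI)
  qed
  have "HGC_iso_complex imp f g J le R h"
    unfolding HGC_iso_complex_def
  proof (intro conjI allI)
    show "bij_betw h UNIV (up_sets J le)" using inj range by (simp add: bij_betw_def)
  next
    fix a b :: 'a
    show "h (sup a b) = h a \<union> h b"
    proof (rule set_eqI, rule iffI)
      fix j assume "j \<in> h (sup a b)"
      then have "j \<in> J" "j \<le> Sup {a, b}" unfolding h_def by auto
      then show "j \<in> h a \<union> h b" using prime unfolding h_def by blast
    qed (auto simp: h_def le_supI1 le_supI2)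
  next
    fix a b :: 'a
    show "h (inf a b) = h a \<inter> h b" unfolding h_def by auto
  next
    fix a b :: 'a
    show "h (imp a b) = frame_imp J le (h a) (h b)"
    proof (rule set_eqI, rule iffI)
      fix j assume "j \<in> h (imp a b)"
      then have j: "j \<in> J" "j \<le> imp a b" unfolding h_def by auto
      have "\<And>k. k \<le> j \<Longrightarrow> k \<le> a \<Longrightarrow> k \<le> b"
      proof -
        fix k assume "k \<le> j" "k \<le> a"
        then have "k \<le> inf a (imp a b)" using j(2) order.trans[of k j "imp a b"] by simp
        then show "k \<le> b" using Himp1[of a b] by (rule order.trans)
      qed
      then show "j \<in> frame_imp J le (h a) (h b)"
        using j unfolding frame_imp_def h_def le_def by auto
    next
      fix j assume "j \<in> frame_imp J le (h a) (h b)"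
      then have j: "j \<in> J" and k: "\<And>k. k \<in> J \<Longrightarrow> k \<le> j \<Longrightarrow> k \<le> a \<Longrightarrow> k \<le> b"
        unfolding frame_imp_def h_def le_def by auto
      have "inf a j \<le> b"
      proof (rule below)
        fix i assume "i \<in> J" "i \<le> inf a j"
        then show "i \<le> b" using k by simp
      qed
      then have "j \<le> imp a b" by (rule Himp2)
      then show "j \<in> h (imp a b)" using j unfolding h_def by simp
    qed
  next
    fix a :: 'a
    show "h (f a) = blacktriangle J R (h a)"
    proof (rule set_eqI, rule iffI)
      fix x assume "x \<in> h (f a)"
      then have x: "x \<in> J" "x \<le> f a" unfolding h_def by auto
      have "f a \<le> Sup (f ` {y \<in> J. y \<le> a})"
      proof -
        have "a \<le> g (Sup (f ` {y \<in> J. y \<le> a}))"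
        proof (rule below)
          fix y assume "y \<in> J" "y \<le> a"
          then have "f y \<in> f ` {y \<in> J. y \<le> a}" by blast
          then have "f y \<le> Sup (f ` {y \<in> J. y \<le> a})" by (rule Sup_upper)
          then show "y \<le> g (Sup (f ` {y \<in> J. y \<le> a}))" using Gc by simp
        qed
        then show ?thesis using Gc by simp
      qed
      then have "x \<le> Sup (f ` {y \<in> J. y \<le> a})" using x(2) by (rule order.trans[rotated])
      then obtain s where "s \<in> f ` {y \<in> J. y \<le> a}" "x \<le> s"
        using prime[OF x(1)] by blast
      then show "x \<in> blacktriangle J R (h a)"
        using x unfolding blacktriangle_def R_def h_def by auto
    next
      fix x assume "x \<in> blacktriangle J R (h a)"
      then obtain y where "x \<in> J" "y \<in> J" and ya: "y \<le> a" and xy: "x \<le> f y"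
        unfolding blacktriangle_def R_def h_def by auto
      have "x \<le> f a" using xy fmono[OF ya] by (rule order.trans)
      then show "x \<in> h (f a)" unfolding h_def using \<open>x \<in> J\<close> by simp
    qed
  next
    fix a :: 'a
    show "h (g a) = blacktriangledown J R (h a)"
    proof (rule set_eqI, rule iffI)
      fix x assume "x \<in> h (g a)"
      then have xJ: "x \<in> J" and fx: "f x \<le> a" unfolding h_def using Gc by auto
      have "\<And>y. y \<le> f x \<Longrightarrow> y \<le> a" using fx order.trans by auto
      then show "x \<in> blacktriangledown J R (h a)"
        unfolding blacktriangledown_def R_def h_def using xJ by auto
    next
      fix x assume "x \<in> blacktriangledown J R (h a)"
      then have x: "x \<in> J" and y: "\<And>y. y \<in> J \<Longrightarrow> y \<le> f x \<Longrightarrow> y \<le> a"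
        unfolding blacktriangledown_def R_def h_def by auto
      have "f x \<le> a"
      proof (rule below)
        fix i assume "i \<in> J" "i \<le> f x"
        then show "i \<le> a" using y by simp
      qed
      then show "x \<in> h (g a)" using x Gc unfolding h_def by auto
    qed
  next
    show "h bot = {}" unfolding h_def J_def using cji_not_bot bot_unique by blast
  next
    show "h top = J" unfolding h_def by auto
  qed
  then show ?thesis using frame by blast
qed

end
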